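(* Under Assumption 1, for any samples $\theta_1,\dots,\theta_M\in\Theta$, the mapping $F$ is monotone on $\mathcal X\times\Delta_M$, i.e. $(u-v)^\top(F(u)-F(v))\ge0$ for all $u,v\in\mathcal X\times\Delta_M$.
   Context: Let $\mathcal N=\{1,\dots,N\}$; agent $i$ chooses $x_i\in\mathcal X_i\subset\mathbb R^n$, $x=(x_i)_{i}\in\mathcal X=\mathcal X_1\times\cdots\times\mathcal X_N\subset\mathbb R^{nN}$, $x_{-i}=(x_j)_{j\ne i}$. Let $\Theta$ be a set, $f_i:\mathbb R^{nN}\to\mathbb R$, $g:\mathbb R^{nN}\times\Theta\to\mathbb R$. Assumption 1: (i) for every $\theta\in\Theta$ and every $x_{-i}\in\prod_{j\ne i}\mathcal X_j$, $f_i(\cdot,x_{-i})+g(\cdot,x_{-i},\theta)$ is convex and continuously differentiable, and each $\mathcal X_i$ is nonempty, compact and convex; (ii) for every $\theta$ and $i$, $g(\cdot,\theta)$ and $f_i$ are twice differentiable on an open convex set containing $\mathcal X$; (iii) there are $\chi^f,\chi^g\in\mathbb R$ with $\chi^f+\chi^g\ge0$ such that for all $u,v\in\mathbb R^{nN}$ and $\theta\in\Theta$: $(u-v)^\top\big((\nabla_{u_i}f_i(u))_{i}-(\nabla_{v_i}f_i(v))_{i}\big)\ge\chi^f\|u-v\|^2$ and $(u-v)^\top(\nabla_u g(u,\theta)-\nabla_v g(v,\theta))\ge\chi^g\|u-v\|^2$. Given samples $\theta_1,\dots,\theta_M$: $\Delta_M=\{y\in\mathbb R^M: y\ge0,\ \sum_m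 y_m=1\}$, $\hat g(x,y)=\sum_{m=1}^M y_m g(x,\theta_m)$, and $F(x,y)=\big((\nabla_{x_i}f_i(x)+\nabla_{x_i}\hat g(x,y))_{i\in\mathcal N},\ -(\nabla_{y_m}\hat g(x,y))_{m=1}^M\big)\in\mathbb R^{nN+M}$. *)

theory Defs
  imports "HOL-Analysis.Analysis"
begin

definition grad :: "('a::euclidean_space \<Rightarrow> real) \<Rightarrow> 'a \<Rightarrow> 'a" where
  "grad h z = (\<Sum>b\<in>Basis. frechet_derivative h (at z) b *\<^sub>R b)"

text \<open>Joint strategy x = (x_i)_i with x_i in R^n: type real^'n^'N.
  Replace block i of x by xi.\<close>
definition upd_block :: "real^'n^'N \<Rightarrow> 'N \<Rightarrow> real^'n \<Rightarrow> real^'n^'N" where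
  "upd_block x i xi = (\<chi> j. if j = i then xi else x $ j)"

definition prod_set :: "('N \<Rightarrow> (real^'n) set) \<Rightarrow> (real^'n^'N) set" where
  "prod_set Xs = {x. \<forall>i. x $ i \<in> Xs i}"

text \<open>Probability prob_simplex Delta_M (indices of type 'm, M = CARD('m)).\<close>
definition prob_simplex :: "(real^'m::finite) set" where
  "prob_simplex = {y. (\<forall>m. 0 \<le> y $ m) \<and> (\<Sum>m\<in>UNIV. y $ m) = 1}"

definition ghat :: "(real^'n^'N \<Rightarrow> 'th \<Rightarrow> real) \<Rightarrow> ('m::finite \<Rightarrow> 'th)
                    \<Rightarrow> (real^'n^'N) \<times> (real^'m) \<Rightarrow> real" where
  "ghat g th z = (\<Sum>m\<in>UNIV. snd z $ m * g (fst z) (th m))"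

definition Fmap :: "('N \<Rightarrow> real^'n^'N \<Rightarrow> real) \<Rightarrow> (real^'n^'N \<Rightarrow> 'th \<Rightarrow> real)
                    \<Rightarrow> ('m::finite \<Rightarrow> 'th)
                    \<Rightarrow> (real^'n^'N) \<times> (real^'m) \<Rightarrow> (real^'n^'N) \<times> (real^'m)" where
  "Fmap f g th z =
     ((\<chi> i. grad (f i) (fst z) $ i + fst (grad (ghat g th) z) $ i),
      - snd (grad (ghat g th) z))"

end

theory Submission
  imports Defs
begin

lemma grad_inner:
  assumes "h differentiable (at z)"
  shows "grad h z \<bullet> w = frechet_derivative h (at z) w"
proof -
  have "bounded_linear (frechet_derivative h (at z))"
    using assms frechet_derivative_works has_derivative_bounded_linear by blast
  then have lin: "linear (frechet_derivative h (at z))" by (rule bounded_linear.linear)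
  have "frechet_derivative h (at z) w = frechet_derivative h (at z) (\<Sum>b\<in>Basis. (w\<bullet>b) *\<^sub>R b)"
    by (simp add: euclidean_representation)
  also have "\<dots> = (\<Sum>b\<in>Basis. (w\<bullet>b) * frechet_derivative h (at z) b)"
    by (simp add: linear_sum[OF lin] linear_scale[OF lin])
  also have "\<dots> = grad h z \<bullet> w" unfolding grad_def
    by (simp add: inner_sum_right inner_commute mult.commute)
  finally show ?thesis by simp
qed

lemma tangent:
  fixes G :: "'a::euclidean_space \<Rightarrow> real"
  assumes S: "convex S" and aS: "a \<in> S" and bS: "b \<in> S"
    and diff: "\<And>x. x \<in> S \<Longrightarrow> G differentiable (at x)"
    and mono: "\<And>u v. (u - v) \<bullet> (grad G u - grad G v) \<ge> c * (norm (u - v))\<^sup>2"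
  shows "G b - G a - grad G a \<bullet> (b - a) \<ge> c/2 * (norm (b - a))\<^sup>2"
proof -
  define d where "d = b - a"
  define \<psi> where "\<psi> t = G (a + t *\<^sub>R d) - c/2 * t^2 * (norm d)\<^sup>2" for t
  define D where "D t = grad G (a + t *\<^sub>R d) \<bullet> d - c * t * (norm d)\<^sup>2" for t
  have seg: "a + t *\<^sub>R d \<in> S" if "0 \<le> t" "t \<le> 1" for t
  proof -
    have "a + t *\<^sub>R d = (1 - t) *\<^sub>R a + t *\<^sub>R b" by (simp add: d_def algebra_simps)
    thus ?thesis using convexD[OF S aS bS, of "1-t" t] that by simp
  qed
  have der: "(\<psi> has_derivative (\<lambda>h. h * D t)) (at t within {0..1})" if "0 \<le> t" "t \<le> 1" for t
  proof -
    let ?p = "a + t *\<^sub>R d"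
    have l: "((\<lambda>t. a + t *\<^sub>R d) has_derivative (\<lambda>h. h *\<^sub>R d)) (at t within {0..1})"
      by (auto intro!: derivative_eq_intros)
    have dG: "G differentiable (at ?p)" using diff seg that by blast
    have g: "(G has_derivative frechet_derivative G (at ?p)) (at ?p)"
      using dG frechet_derivative_works by blast
    have lin: "linear (frechet_derivative G (at ?p))"
      using g has_derivative_linear by blast
    have c1: "((\<lambda>t. G (a + t *\<^sub>R d)) has_derivative (\<lambda>h. frechet_derivative G (at ?p) (h *\<^sub>R d))) (at t within {0..1})"
      using has_derivative_compose[OF l g] .
    have eq: "frechet_derivative G (at ?p) (h *\<^sub>R d) = h * (grad G ?p \<bullet> d)" for h
      using linear_scale[OF lin] grad_inner[OF dG] by simp
    have c2: "((\<lambda>t. c/2 * t^2 * (norm d)\<^sup>2) has_derivative (\<lambda>h. h * (c * t * (norm d)\<^sup>2))) (at t within {0..1})"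
      by (auto intro!: derivative_eq_intros simp: algebra_simps)
    have "(\<psi> has_derivative (\<lambda>h. h * (grad G ?p \<bullet> d) - h * (c * t * (norm d)\<^sup>2))) (at t within {0..1})"
      unfolding \<psi>_def using has_derivative_diff[OF c1 c2] eq by simp
    thus ?thesis unfolding D_def by (simp add: algebra_simps)
  qed
  obtain \<xi> where \<xi>: "\<xi> \<in> {0<..<1}" and mv: "\<psi> 1 - \<psi> 0 = (1 - 0) * D \<xi>"
    using mvt_simple[of 0 1 \<psi> "\<lambda>t h. h * D t"] der by auto
  have "(\<xi> *\<^sub>R d) \<bullet> (grad G (a + \<xi> *\<^sub>R d) - grad G a) \<ge> c * (norm (\<xi> *\<^sub>R d))\<^sup>2"
    using mono[of "a + \<xi> *\<^sub>R d" a] by simp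
  hence "\<xi> * (d \<bullet> (grad G (a + \<xi> *\<^sub>R d) - grad G a)) \<ge> \<xi> * (c * \<xi> * (norm d)\<^sup>2)"
    using \<xi> by (simp add: power2_eq_square algebra_simps)
  hence "d \<bullet> (grad G (a + \<xi> *\<^sub>R d) - grad G a) \<ge> c * \<xi> * (norm d)\<^sup>2"
    using \<xi> by simp
  hence "D \<xi> \<ge> grad G a \<bullet> d" unfolding D_def by (simp add: inner_diff_right inner_commute)
  with mv show ?thesis unfolding \<psi>_def d_def by simp
qed


lemma ghat_grad_inner:
  fixes g :: "real^'n::finite^'N::finite \<Rightarrow> 'th \<Rightarrow> real" and th :: "'m::finite \<Rightarrow> 'th"
  assumes dm: "\<And>m. (\<lambda>x. g x (th m)) differentiable (at (fst z))"
  shows "grad (ghat g th) z \<bullet> (p, q) =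
    (\<Sum>m\<in>UNIV. snd z $ m * (grad (\<lambda>x. g x (th m)) (fst z) \<bullet> p) + q $ m * g (fst z) (th m))"
proof -
  have gm: "((\<lambda>w. g (fst w) (th m)) has_derivative (\<lambda>w. frechet_derivative (\<lambda>x. g x (th m)) (at (fst z)) (fst w))) (at z)" for m
    using has_derivative_compose[OF has_derivative_fst[OF has_derivative_ident] 
        dm[of m, unfolded frechet_derivative_works]] by simp
  have sm: "((\<lambda>w. snd w $ m) has_derivative (\<lambda>w. snd w $ m)) (at z)" for m :: 'm
    by (rule bounded_linear_imp_has_derivative, rule bounded_linear_compose[OF bounded_linear_vec_nth bounded_linear_snd])
  have D: "(ghat g th has_derivative
     (\<lambda>w. \<Sum>m\<in>UNIV. snd z $ m * frechet_derivative (\<lambda>x. g x (th m)) (at (fst z)) (fst w) + snd w $ m * g (fst z) (th m))) (at z)"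
    unfolding ghat_def
  proof (rule has_derivative_sum)
    fix m :: 'm
    show "((\<lambda>w. snd w $ m * g (fst w) (th m)) has_derivative
      (\<lambda>w. snd z $ m * frechet_derivative (\<lambda>x. g x (th m)) (at (fst z)) (fst w) + snd w $ m * g (fst z) (th m))) (at z)"
      using has_derivative_mult[OF sm gm, of m m] by (simp add: mult.commute)
  qed
  have "grad (ghat g th) z \<bullet> (p, q) = frechet_derivative (ghat g th) (at z) (p, q)"
    using grad_inner D differentiableI by blast
  also have "\<dots> = (\<Sum>m\<in>UNIV. snd z $ m * frechet_derivative (\<lambda>x. g x (th m)) (at (fst z)) p + q $ m * g (fst z) (th m))"
    unfolding frechet_derivative_at[OF D, symmetric] by simp
  also have "\<dots> = (\<Sum>m\<in>UNIV. snd z $ m * (grad (\<lambda>x. g x (th m)) (fst z) \<bullet> p) + q $ m * g (fst z) (th m))"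
    using grad_inner[OF dm] by simp
  finally show ?thesis .
qed


lemma convex_prod_set:
  assumes "\<And>i. convex (Xs i)"
  shows "convex (prod_set Xs)"
  unfolding convex_def prod_set_def using assms by (auto simp: convex_def)

theorem lemma1:
  fixes f :: "'N::finite \<Rightarrow> real^'n::finite^'N \<Rightarrow> real"
    and g :: "real^'n^'N \<Rightarrow> 'th \<Rightarrow> real"
    and Theta :: "'th set"
    and Xs :: "'N \<Rightarrow> (real^'n) set"
    and chif chig :: real
    and th :: "'m::finite \<Rightarrow> 'th"
  assumes A1_sets: "\<And>i. Xs i \<noteq> {} \<and> compact (Xs i) \<and> convex (Xs i)"
    and A1_convex: "\<And>i x \<theta>. \<theta> \<in> Theta \<Longrightarrow> (\<forall>j. j \<noteq> i \<longrightarrow> x $ j \<in> Xs j) \<Longrightarrow>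
          convex_on UNIV (\<lambda>xi. f i (upd_block x i xi) + g (upd_block x i xi) \<theta>)"
    and A1_C1: "\<And>i x \<theta>. \<theta> \<in> Theta \<Longrightarrow> (\<forall>j. j \<noteq> i \<longrightarrow> x $ j \<in> Xs j) \<Longrightarrow>
          (\<forall>xi. (\<lambda>xi. f i (upd_block x i xi) + g (upd_block x i xi) \<theta>) differentiable (at xi))
          \<and> continuous_on UNIV (grad (\<lambda>xi. f i (upd_block x i xi) + g (upd_block x i xi) \<theta>))"
    and A2_f: "\<And>i. \<exists>U. open U \<and> convex U \<and> prod_set Xs \<subseteq> U \<and>
          (\<forall>x\<in>U. f i differentiable (at x) \<and> grad (f i) differentiable (at x))"
    and A2_g: "\<And>\<theta>. \<theta> \<in> Theta \<Longrightarrow> \<exists>U. open U \<and> convex U \<and> prod_set Xs \<subseteq> U \<and>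
          (\<forall>x\<in>U. (\<lambda>x. g x \<theta>) differentiable (at x) \<and> grad (\<lambda>x. g x \<theta>) differentiable (at x))"
    and A3_sum: "chif + chig \<ge> 0"
    and A3_f: "\<And>u v. (u - v) \<bullet> ((\<chi> i. grad (f i) u $ i) - (\<chi> i. grad (f i) v $ i))
                  \<ge> chif * (norm (u - v))\<^sup>2"
    and A3_g: "\<And>u v \<theta>. \<theta> \<in> Theta \<Longrightarrow>
          (u - v) \<bullet> (grad (\<lambda>x. g x \<theta>) u - grad (\<lambda>x. g x \<theta>) v) \<ge> chig * (norm (u - v))\<^sup>2"
    and samples: "\<And>m. th m \<in> Theta"
  shows "\<forall>u \<in> prod_set Xs \<times> prob_simplex. \<forall>v \<in> prod_set Xs \<times> prob_simplex.
           (u - v) \<bullet> (Fmap f g th u - Fmap f g th v) \<ge> 0"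
  proof (intro ballI)
  fix u v :: "(real^'n^'N) \<times> (real^'m)"
  assume uS: "u \<in> prod_set Xs \<times> prob_simplex" and vS: "v \<in> prod_set Xs \<times> prob_simplex"
  obtain x :: "real^'n^'N" and y :: "real^'m" where u: "u = (x, y)" by (cases u)
  obtain x' :: "real^'n^'N" and y' :: "real^'m" where v: "v = (x', y')" by (cases v)
  have xS: "x \<in> prod_set Xs" and x'S: "x' \<in> prod_set Xs" using uS vS u v by auto
  have y: "y \<in> prob_simplex" and y': "y' \<in> prob_simplex" using uS vS u v by auto
  have cvx: "convex (prod_set Xs)" using convex_prod_set A1_sets by blast
  have dg: "(\<lambda>x. g x (th m)) differentiable (at z)" if "z \<in> prod_set Xs" for z m
  proof -
    obtain U where "prod_set Xs \<subseteq> U" "\<forall>x\<in>U. (\<lambda>x. g x (th m)) differentiable (at x) \<and> grad (\<lambda>x. g x (th m)) differentiable (at x)"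
      using A2_g[OF samples[of m]] by blast
    thus ?thesis using that by blast
  qed
  define d where "d = x - x'"
  define e where "e = y - y'"
  define A where "A z = (\<chi> i. grad (f i) z $ i)" for z
  define G where "G m z = grad (\<lambda>x. g x (th m)) z" for m z
  define gg where "gg m z = g z (th m)" for m z
  have fstF: "fst (Fmap f g th (z, w)) = A z + fst (grad (ghat g th) (z, w))" for z w
    unfolding Fmap_def A_def by (simp add: vec_eq_iff)
  have sndF: "snd (Fmap f g th (z, w)) = - snd (grad (ghat g th) (z, w))" for z w
    unfolding Fmap_def by simp
  have gi: "grad (ghat g th) (z, w) \<bullet> (d, - e) = (\<Sum>m\<in>UNIV. w $ m * (G m z \<bullet> d) - e $ m * gg m z)"
    if "z \<in> prod_set Xs" for z w
    using ghat_grad_inner[of g th "(z,w)" d "- e"] dg[OF that] unfolding G_def gg_def by simp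
  have "(u - v) \<bullet> (Fmap f g th u - Fmap f g th v) =
     d \<bullet> (A x - A x') + (grad (ghat g th) (x, y) \<bullet> (d, - e) - grad (ghat g th) (x', y') \<bullet> (d, - e))"
  proof -
    have FF: "Fmap f g th (z, w) = (A z + fst (grad (ghat g th) (z, w)), - snd (grad (ghat g th) (z, w)))" for z w
      using fstF sndF by (metis prod.collapse)
    have IP1: "(a, b) \<bullet> p = a \<bullet> fst p + b \<bullet> snd p" for a b and p :: "(real^'n^'N) \<times> (real^'m)"
      by (cases p) simp
    have IP2: "p \<bullet> (a, b) = fst p \<bullet> a + snd p \<bullet> b" for a b and p :: "(real^'n^'N) \<times> (real^'m)"
      by (cases p) simp
    show ?thesis unfolding u v FF d_def e_def
      by (simp add: IP1 IP2 inner_diff_right inner_add_right inner_diff_left inner_commute algebra_simps)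
  qed
  also have "grad (ghat g th) (x, y) \<bullet> (d, - e) - grad (ghat g th) (x', y') \<bullet> (d, - e)
      = (\<Sum>m\<in>UNIV. y $ m * (G m x \<bullet> d - gg m x + gg m x') + y' $ m * (gg m x - gg m x' - G m x' \<bullet> d))"
    unfolding gi[OF xS] gi[OF x'S] sum_subtractf[symmetric]
    by (rule sum.cong) (auto simp: e_def algebra_simps)
  finally have eq: "(u - v) \<bullet> (Fmap f g th u - Fmap f g th v) = d \<bullet> (A x - A x') +
      (\<Sum>m\<in>UNIV. y $ m * (G m x \<bullet> d - gg m x + gg m x') + y' $ m * (gg m x - gg m x' - G m x' \<bullet> d))" .
  have t1: "G m x \<bullet> d - gg m x + gg m x' \<ge> chig/2 * (norm d)\<^sup>2" for m
  proof -
    have "gg m x' - gg m x - G m x \<bullet> (x' - x) \<ge> chig/2 * (norm (x' - x))\<^sup>2"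
      unfolding G_def gg_def
      by (rule tangent[OF cvx xS x'S]) (auto intro: dg A3_g[OF samples])
    moreover have "norm (x' - x) = norm d" unfolding d_def by (rule norm_minus_commute)
    moreover have "G m x \<bullet> (x' - x) = - (G m x \<bullet> d)" unfolding d_def by (simp add: inner_diff_right)
    ultimately show ?thesis by simp
  qed
  have t2: "gg m x - gg m x' - G m x' \<bullet> d \<ge> chig/2 * (norm d)\<^sup>2" for m
    unfolding G_def gg_def d_def
    by (rule tangent[OF cvx x'S xS]) (auto intro: dg A3_g[OF samples])
  have ypos: "0 \<le> y $ m" "0 \<le> y' $ m" for m using y y' unfolding prob_simplex_def by auto
  have ysum: "(\<Sum>m\<in>UNIV. y $ m) = 1" "(\<Sum>m\<in>UNIV. y' $ m) = 1" using y y' unfolding prob_simplex_def by auto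
  have "(\<Sum>m\<in>UNIV. y $ m * (chig/2 * (norm d)\<^sup>2) + y' $ m * (chig/2 * (norm d)\<^sup>2))
     \<le> (\<Sum>m\<in>UNIV. y $ m * (G m x \<bullet> d - gg m x + gg m x') + y' $ m * (gg m x - gg m x' - G m x' \<bullet> d))"
    by (rule sum_mono, rule add_mono; rule mult_left_mono) (use t1 t2 ypos in auto)
  moreover have "(\<Sum>m\<in>UNIV. y $ m * (chig/2 * (norm d)\<^sup>2) + y' $ m * (chig/2 * (norm d)\<^sup>2)) = chig * (norm d)\<^sup>2"
  proof -
    have "(\<Sum>m\<in>UNIV. y $ m * (chig/2 * (norm d)\<^sup>2)) = (\<Sum>m\<in>UNIV. y $ m) * (chig/2 * (norm d)\<^sup>2)"
      by (rule sum_distrib_right[symmetric])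
    moreover have "(\<Sum>m\<in>UNIV. y' $ m * (chig/2 * (norm d)\<^sup>2)) = (\<Sum>m\<in>UNIV. y' $ m) * (chig/2 * (norm d)\<^sup>2)"
      by (rule sum_distrib_right[symmetric])
    ultimately show ?thesis unfolding sum.distrib ysum by simp
  qed
  moreover have "d \<bullet> (A x - A x') \<ge> chif * (norm d)\<^sup>2" unfolding A_def d_def by (rule A3_f)
  moreover have "chif * (norm d)\<^sup>2 + chig * (norm d)\<^sup>2 \<ge> 0"
    using A3_sum by (simp add: distrib_right[symmetric])
  ultimately show "(u - v) \<bullet> (Fmap f g th u - Fmap f g th v) \<ge> 0" unfolding eq by linarith
qed

end
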